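(* Let $S,T$ be finite nonempty sets, $A,B\in\mathbb{R}^{S\times T}$, $\varepsilon>0$, and $f,g\in\mathbb{R}$ such that $E(f,g)\neq\emptyset$. If either ($f-\varepsilon\ge\alpha$ and $g-\varepsilon\ge\beta$) or ($f-\varepsilon<\alpha$ and $g-\varepsilon<\beta$), then $E\cap E(f,g)\neq\emptyset$.
   Context: $\operatorname{co}(A,B)$ is the convex hull in $\mathbb{R}^2$ of $\{(A(s,t),B(s,t)):s\in S,t\in T\}$. The punishment levels are $\alpha:=\min_{y\in\Delta(T)}\max_{x\in\Delta(S)}xAy$ and $\beta:=\min_{x\in\Delta(S)}\max_{y\in\Delta(T)}xBy$, where $xMy=\sum_{s,t}M(s,t)x(s)y(t)$. The set of uniform equilibrium payoffs is $E:=\{(\bar f,\bar g)\in\operatorname{co}(A,B):\bar f\ge\alpha,\ \bar g\ge\beta\}$, and the $\varepsilon$-acceptable payoff set is $E(f,g):=\operatorname{co}(A,B)\cap\{(\bar f,\bar g)\in\mathbb{R}^2:\bar f+\varepsilon\ge f,\ \bar g+\varepsilon\ge g\}$. *)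

theory Defs
  imports "HOL-Analysis.Analysis"
begin

definition mixed_strats :: "'a set \<Rightarrow> ('a \<Rightarrow> real) set" where
  "mixed_strats S = {x. (\<forall>s\<in>S. 0 \<le> x s) \<and> (\<forall>s. s \<notin> S \<longrightarrow> x s = 0) \<and> (\<Sum>s\<in>S. x s) = 1}"

definition bilin :: "'s set \<Rightarrow> 't set \<Rightarrow> ('s \<Rightarrow> real) \<Rightarrow> ('s \<Rightarrow> 't \<Rightarrow> real) \<Rightarrow> ('t \<Rightarrow> real) \<Rightarrow> real" where
  "bilin S T x M y = (\<Sum>s\<in>S. \<Sum>t\<in>T. M s t * x s * y t)"

definition coAB :: "'s set \<Rightarrow> 't set \<Rightarrow> ('s \<Rightarrow> 't \<Rightarrow> real) \<Rightarrow> ('s \<Rightarrow> 't \<Rightarrow> real) \<Rightarrow> (real \<times> real) set" where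
  "coAB S T A B = convex hull {(A s t, B s t) | s t. s \<in> S \<and> t \<in> T}"

text \<open>Punishment levels; min/max are attained (continuous functions on compact simplices),
  so they coincide with Inf/Sup.\<close>
definition alpha :: "'s set \<Rightarrow> 't set \<Rightarrow> ('s \<Rightarrow> 't \<Rightarrow> real) \<Rightarrow> real" where
  "alpha S T A = (INF y\<in>mixed_strats T. SUP x\<in>mixed_strats S. bilin S T x A y)"

definition beta :: "'s set \<Rightarrow> 't set \<Rightarrow> ('s \<Rightarrow> 't \<Rightarrow> real) \<Rightarrow> real" where
  "beta S T B = (INF x\<in>mixed_strats S. SUP y\<in>mixed_strats T. bilin S T x B y)"

definition Eq_payoffs :: "'s set \<Rightarrow> 't set \<Rightarrow> ('s \<Rightarrow> 't \<Rightarrow> real) \<Rightarrow> ('s \<Rightarrow> 't \<Rightarrow> real) \<Rightarrow> (real \<times> real) set" where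
  "Eq_payoffs S T A B = {p \<in> coAB S T A B. fst p \<ge> alpha S T A \<and> snd p \<ge> beta S T B}"

definition Eacc :: "'s set \<Rightarrow> 't set \<Rightarrow> ('s \<Rightarrow> 't \<Rightarrow> real) \<Rightarrow> ('s \<Rightarrow> 't \<Rightarrow> real) \<Rightarrow> real \<Rightarrow> real \<Rightarrow> real \<Rightarrow> (real \<times> real) set" where
  "Eacc S T A B \<epsilon> f g = coAB S T A B \<inter> {p. fst p + \<epsilon> \<ge> f \<and> snd p + \<epsilon> \<ge> g}"

end

theory Submission imports Defs begin

lemma sep_choice:
  fixes L U :: "real set"
  assumes "finite L" "finite U" "\<forall>a\<in>L. \<forall>b\<in>U. a < b"
  shows "\<exists>c. (\<forall>a\<in>L. a < c) \<and> (\<forall>b\<in>U. c < b)"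
proof (cases "L = {}")
  case True
  show ?thesis
  proof (cases "U = {}")
    case True with \<open>L = {}\<close> show ?thesis by auto
  next
    case False
    show ?thesis
    proof (intro exI[of _ "Min U - 1"] conjI ballI)
      fix b assume "b \<in> U" then have "Min U \<le> b" using assms by simp
      then show "Min U - 1 < b" by linarith
    qed (use True in simp)
  qed
next
  case False
  show ?thesis
  proof (cases "U = {}")
    case True
    show ?thesis
    proof (intro exI[of _ "Max L + 1"] conjI ballI)
      fix a assume "a \<in> L" then have "a \<le> Max L" using assms by simp
      then show "a < Max L + 1" by linarith
    qed (use True in simp)
  next
    case F2: False
    have "Max L \<in> L" "Min U \<in> U" using assms False F2 by auto
    then have lt: "Max L < Min U" using assms by blast
    show ?thesis
    proof (intro exI[of _ "(Max L + Min U) / 2"] conjI ballI)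
      fix a assume "a \<in> L" then have "a \<le> Max L" using assms by simp
      then have "2 * a < Max L + Min U" using lt by linarith
      then show "a < (Max L + Min U) / 2" by (simp add: field_simps)
    next
      fix b assume "b \<in> U" then have "Min U \<le> b" using assms by simp
      then have "Max L + Min U < 2 * b" using lt by linarith
      then show "(Max L + Min U) / 2 < b" by (simp add: field_simps)
    qed
  qed
qed

lemma aux1: fixes d q vp vn :: real
  assumes "0 < d" "0 < q" "d * vp + q * vn < 0" shows "vn / d < - vp / q"
proof -
  have "vn * q < (- vp) * d" using assms(3) by (simp add: algebra_simps)
  then have "vn < ((- vp) * d) / q" using pos_less_divide_eq[OF assms(2)] by blast
  also have "((- vp) * d) / q = ((- vp) / q) * d" by simp
  finally have "vn < ((- vp) / q) * d" .
  then show ?thesis using pos_divide_less_eq[OF assms(1)] by blast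
qed
lemma aux2: fixes c r v :: real
  assumes "0 < r" "c < - v / r" shows "r * c + v < 0"
proof -
  have "c * r < - v" using assms(2) pos_less_divide_eq[OF assms(1)] by blast
  then show ?thesis by (simp add: mult.commute)
qed
lemma aux3: fixes c r v :: real
  assumes "r < 0" "v / (- r) < c" shows "r * c + v < 0"
proof -
  have r: "0 < - r" using assms(1) by simp
  have "v < c * (- r)" using assms(2) pos_divide_less_eq[OF r] by blast
  then show ?thesis by (simp add: algebra_simps)
qed

lemma gordan_set:
  fixes T :: "'t set"
  assumes "finite T"
  shows "finite R \<Longrightarrow> (\<exists>y. \<forall>r\<in>R. (\<Sum>t\<in>T. r t * y t) < (0::real))
     \<or> (\<exists>x. (\<forall>r\<in>R. 0 \<le> x r) \<and> (\<exists>r\<in>R. 0 < x r) \<and> (\<forall>t\<in>T. (\<Sum>r\<in>R. x r * r t) = 0))"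
  using assms
proof (induction T arbitrary: R rule: finite_induct)
  case empty
  show ?case
  proof (cases "R = {}")
    case True then show ?thesis by auto
  next
    case False
    then show ?thesis by (intro disjI2 exI[of _ "\<lambda>r. 1"]) auto
  qed
next
  case (insert t0 T R)
  define P where "P = {r\<in>R. r t0 > 0}"
  define N where "N = {r\<in>R. r t0 < 0}"
  define Z where "Z = {r\<in>R. r t0 = 0}"
  define comb where "comb = (\<lambda>(p::'t\<Rightarrow>real, n::'t\<Rightarrow>real). (\<lambda>t. (- n t0) * p t + p t0 * n t))"
  define R' where "R' = Z \<union> comb ` (P \<times> N)"
  have fin: "finite R'" using insert.prems unfolding R'_def P_def N_def Z_def by auto
  from insert.IH[OF fin] show ?case
  proof
    assume "\<exists>y. \<forall>r\<in>R'. (\<Sum>t\<in>T. r t * y t) < 0"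
    then obtain y where y: "\<forall>r\<in>R'. (\<Sum>t\<in>T. r t * y t) < 0" by blast
    define v where "v r = (\<Sum>t\<in>T. r t * y t)" for r
    have vc: "v (comb (p, n)) = (- n t0) * v p + p t0 * v n" for p n
    proof -
      have "(\<Sum>t\<in>T. comb (p, n) t * y t) = (\<Sum>t\<in>T. (- n t0) * (p t * y t) + p t0 * (n t * y t))"
        unfolding comb_def by (intro sum.cong) (auto simp: algebra_simps)
      then have "v (comb (p, n)) = p t0 * v n - n t0 * v p"
        unfolding v_def by (simp add: sum_subtractf sum_distrib_left)
      then show ?thesis by simp
    qed
    have fN: "finite N" and fP: "finite P" using insert.prems unfolding N_def P_def by auto
    have "\<forall>a\<in>(\<lambda>n. v n / (- n t0)) ` N. \<forall>b\<in>(\<lambda>p. - v p / p t0) ` P. a < b"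
    proof (intro ballI, elim imageE)
      fix a b n p assume a: "a = v n / (- n t0)" and nN: "n \<in> N" and b: "b = - v p / p t0" and pP: "p \<in> P"
      have "comb (p, n) \<in> R'" using nN pP unfolding R'_def by auto
      then have "(- n t0) * v p + p t0 * v n < 0" using y vc v_def by metis
      moreover have "n t0 < 0" "p t0 > 0" using nN pP unfolding N_def P_def by auto
      ultimately show "a < b" unfolding a b by (intro aux1) auto
    qed
    then obtain c where c: "\<forall>a\<in>(\<lambda>n. v n / (- n t0)) ` N. a < c" "\<forall>b\<in>(\<lambda>p. - v p / p t0) ` P. c < b"
      using sep_choice[OF finite_imageI[OF fN] finite_imageI[OF fP]] by blast
    define y' where "y' = y(t0 := c)"
    have split: "(\<Sum>t\<in>insert t0 T. r t * y' t) = r t0 * c + v r" for r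
    proof -
      have "(\<Sum>t\<in>insert t0 T. r t * y' t) = r t0 * c + (\<Sum>t\<in>T. r t * y' t)"
        using insert.hyps by (simp add: y'_def)
      also have "(\<Sum>t\<in>T. r t * y' t) = v r"
        unfolding v_def y'_def using insert.hyps by (intro sum.cong) auto
      finally show ?thesis .
    qed
    have "\<forall>r\<in>R. (\<Sum>t\<in>insert t0 T. r t * y' t) < 0"
    proof
      fix r assume rR: "r \<in> R"
      consider "r t0 > 0" | "r t0 < 0" | "r t0 = 0" by linarith
      then show "(\<Sum>t\<in>insert t0 T. r t * y' t) < 0"
      proof cases
        case 1
        then have "c < - v r / r t0" using c(2) rR unfolding P_def by auto
        with 1 show ?thesis unfolding split by (rule aux2)
      next
        case 2
        then have "v r / (- r t0) < c" using c(1) rR unfolding N_def by auto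
        with 2 show ?thesis unfolding split by (rule aux3)
      next
        case 3
        then have "r \<in> R'" using rR unfolding R'_def Z_def by auto
        with 3 y show ?thesis unfolding split v_def by auto
      qed
    qed
    then show ?thesis by blast
  next
    assume "\<exists>x. (\<forall>r\<in>R'. 0 \<le> x r) \<and> (\<exists>r\<in>R'. 0 < x r) \<and> (\<forall>t\<in>T. (\<Sum>r\<in>R'. x r * r t) = 0)"
    then obtain x' where x': "\<forall>r\<in>R'. 0 \<le> x' r" "\<exists>r\<in>R'. 0 < x' r" "\<forall>t\<in>T. (\<Sum>r\<in>R'. x' r * r t) = 0"
      by blast
    have rep: "\<exists>c. (\<forall>r\<in>R. 0 \<le> c r) \<and> (\<exists>r\<in>R. 0 < c r) \<and> (\<forall>t. r' t = (\<Sum>r\<in>R. c r * r t))"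
      if r'R: "r' \<in> R'" for r'
    proof (cases "r' \<in> Z")
      case True
      then have rR: "r' \<in> R" unfolding Z_def by auto
      have sr: "(\<Sum>r\<in>R. (if r = r' then 1 else 0) * r t) = r' t" for t
      proof -
        have "(\<Sum>r\<in>R. (if r = r' then 1 else 0) * r t) = (\<Sum>r\<in>R. if r = r' then r' t else 0)"
          by (intro sum.cong) auto
        then show ?thesis using rR insert.prems by simp
      qed
      show ?thesis
        by (rule exI[of _ "\<lambda>r. if r = r' then 1 else 0"]) (use rR sr in auto)
    next
      case False
      then obtain p n where pn: "p \<in> P" "n \<in> N" "r' = comb (p, n)" using r'R False unfolding R'_def by blast
      then have pR: "p \<in> R" and nR: "n \<in> R" and ps: "p t0 > 0" and ns: "n t0 < 0"
        unfolding P_def N_def by auto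
      then have pn_ne: "p \<noteq> n" by auto
      show ?thesis
      proof (intro exI[of _ "\<lambda>r. (if r = p then - n t0 else 0) + (if r = n then p t0 else 0)"] conjI ballI allI)
        fix r assume "r \<in> R" then show "0 \<le> (if r = p then - n t0 else 0) + (if r = n then p t0 else 0)"
          using ps ns by auto
      next
        show "\<exists>r\<in>R. 0 < (if r = p then - n t0 else 0) + (if r = n then p t0 else 0)"
          using pR ns pn_ne by (intro bexI[of _ p]) auto
      next
        fix t
        have "(\<Sum>r\<in>R. ((if r = p then - n t0 else 0) + (if r = n then p t0 else 0)) * r t)
          = (\<Sum>r\<in>R. (if r = p then - n t0 * p t else 0)) + (\<Sum>r\<in>R. (if r = n then p t0 * n t else 0))"
          by (subst sum.distrib[symmetric]) (intro sum.cong, auto simp: distrib_right)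
        also have "\<dots> = - n t0 * p t + p t0 * n t" using pR nR insert.prems by simp
        finally show "r' t = (\<Sum>r\<in>R. ((if r = p then - n t0 else 0) + (if r = n then p t0 else 0)) * r t)"
          using pn(3) unfolding comb_def by simp
      qed
    qed
    then obtain C where C: "\<forall>r'\<in>R'. (\<forall>r\<in>R. 0 \<le> C r' r) \<and> (\<exists>r\<in>R. 0 < C r' r) \<and> (\<forall>t. r' t = (\<Sum>r\<in>R. C r' r * r t))"
      by metis
    define x where "x r = (\<Sum>r'\<in>R'. x' r' * C r' r)" for r
    have xnn: "\<forall>r\<in>R. 0 \<le> x r" unfolding x_def using x'(1) C by (auto intro!: sum_nonneg)
    have xpos: "\<exists>r\<in>R. 0 < x r"
    proof -
      obtain r' where r': "r' \<in> R'" "0 < x' r'" using x'(2) by blast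
      then obtain r where r: "r \<in> R" "0 < C r' r" using C by blast
      have "x' r' * C r' r \<le> x r" unfolding x_def
        using r' r x'(1) C fin by (intro member_le_sum) auto
      moreover have "0 < x' r' * C r' r" using r' r by simp
      ultimately show ?thesis using r by force
    qed
    have xsum: "(\<Sum>r\<in>R. x r * r t) = (\<Sum>r'\<in>R'. x' r' * r' t)" for t
    proof -
      have "(\<Sum>r\<in>R. x r * r t) = (\<Sum>r\<in>R. \<Sum>r'\<in>R'. x' r' * (C r' r * r t))"
        unfolding x_def by (simp add: sum_distrib_right mult.assoc)
      also have "\<dots> = (\<Sum>r'\<in>R'. x' r' * (\<Sum>r\<in>R. C r' r * r t))"
        by (subst sum.swap) (simp add: sum_distrib_left)
      also have "\<dots> = (\<Sum>r'\<in>R'. x' r' * r' t)" using C by (intro sum.cong) auto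
      finally show ?thesis .
    qed
    have z0: "r' t0 = 0" if "r' \<in> R'" for r'
      using that unfolding R'_def Z_def comb_def by (auto simp: algebra_simps)
    have "\<forall>t\<in>insert t0 T. (\<Sum>r\<in>R. x r * r t) = 0"
    proof
      fix t assume "t \<in> insert t0 T"
      moreover have "(\<Sum>r'\<in>R'. x' r' * r' t0) = 0" using z0 by (intro sum.neutral) auto
      ultimately show "(\<Sum>r\<in>R. x r * r t) = 0" using x'(3) unfolding xsum by auto
    qed
    then show ?thesis using xnn xpos by blast
  qed
qed

lemma gordan_idx:
  fixes row :: "'i \<Rightarrow> 't \<Rightarrow> real"
  assumes "finite I" "finite T"
  shows "(\<exists>y. \<forall>i\<in>I. (\<Sum>t\<in>T. row i t * y t) < 0)
    \<or> (\<exists>x. (\<forall>i\<in>I. 0 \<le> x i) \<and> (\<exists>i\<in>I. 0 < x i) \<and> (\<forall>t\<in>T. (\<Sum>i\<in>I. x i * row i t) = 0))"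
proof -
  have fR: "finite (row ` I)" using assms by simp
  from gordan_set[OF assms(2) fR] show ?thesis
  proof (elim disjE exE conjE)
    fix y assume "\<forall>r\<in>row ` I. (\<Sum>t\<in>T. r t * y t) < 0"
    then show ?thesis by auto
  next
    fix x assume x: "\<forall>r\<in>row ` I. 0 \<le> x r" "\<exists>r\<in>row ` I. 0 < x r"
      "\<forall>t\<in>T. (\<Sum>r\<in>row ` I. x r * r t) = 0"
    define k where "k r = real (card {j\<in>I. row j = r})" for r
    have kpos: "k r > 0" if "r \<in> row ` I" for r
    proof -
      have "{j\<in>I. row j = r} \<noteq> {}" using that by auto
      moreover have "finite {j\<in>I. row j = r}" using assms by simp
      ultimately show ?thesis unfolding k_def by (simp add: card_gt_0_iff)
    qed
    define z where "z i = x (row i) / k (row i)" for i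
    have zs: "(\<Sum>i\<in>I. z i * row i t) = (\<Sum>r\<in>row ` I. x r * r t)" for t
    proof -
      have "(\<Sum>i\<in>I. z i * row i t) = (\<Sum>r\<in>row ` I. \<Sum>i\<in>{j\<in>I. row j = r}. z i * row i t)"
        using sum.image_gen[OF assms(1), of "\<lambda>i. z i * row i t" row] by simp
      also have "\<dots> = (\<Sum>r\<in>row ` I. x r * r t)"
      proof (intro sum.cong refl)
        fix r assume r: "r \<in> row ` I"
        have "(\<Sum>i\<in>{j\<in>I. row j = r}. z i * row i t) = (\<Sum>i\<in>{j\<in>I. row j = r}. x r / k r * r t)"
          unfolding z_def by (intro sum.cong) auto
        also have "\<dots> = k r * (x r / k r * r t)" unfolding k_def by simp
        also have "\<dots> = x r * r t" using kpos[OF r] by simp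
        finally show "(\<Sum>i\<in>{j\<in>I. row j = r}. z i * row i t) = x r * r t" .
      qed
      finally show ?thesis .
    qed
    have "\<forall>i\<in>I. 0 \<le> z i" unfolding z_def using x(1) kpos by (auto intro!: divide_nonneg_pos)
    moreover have "\<exists>i\<in>I. 0 < z i" unfolding z_def using x(2) kpos by (auto intro!: divide_pos_pos)
    moreover have "\<forall>t\<in>T. (\<Sum>i\<in>I. z i * row i t) = 0" using zs x(3) by simp
    ultimately show ?thesis by blast
  qed
qed

lemma ville:
  fixes M :: "'s \<Rightarrow> 't \<Rightarrow> real"
  assumes S: "finite S" "S \<noteq> {}" and T: "finite T" "T \<noteq> {}"
  shows "(\<exists>y\<in>mixed_strats T. \<forall>s\<in>S. (\<Sum>t\<in>T. M s t * y t) < 0)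
     \<or> (\<exists>x\<in>mixed_strats S. \<forall>t\<in>T. 0 \<le> (\<Sum>s\<in>S. x s * M s t))"
proof -
  define I where "I = Inl ` S \<union> Inr ` T"
  define row where "row i = (case i of Inl s \<Rightarrow> (\<lambda>t. M s t) | Inr t1 \<Rightarrow> (\<lambda>t. if t = t1 then -1 else 0))" for i
  have fI: "finite I" unfolding I_def using S T by simp
  have sumI: "(\<Sum>i\<in>I. h i) = (\<Sum>s\<in>S. h (Inl s)) + (\<Sum>t\<in>T. h (Inr t))" for h :: "'s + 't \<Rightarrow> real"
    unfolding I_def using S T
    by (subst sum.union_disjoint) (auto simp: sum.reindex)
  from gordan_idx[OF fI T(1), of row] show ?thesis
  proof (elim disjE exE conjE)
    fix y assume y: "\<forall>i\<in>I. (\<Sum>t\<in>T. row i t * y t) < 0"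
    have ypos: "y t > 0" if "t \<in> T" for t
    proof -
      have "(\<Sum>t'\<in>T. row (Inr t) t' * y t') < 0" using y that unfolding I_def by auto
      moreover have "(\<Sum>t'\<in>T. row (Inr t) t' * y t') = - y t"
      proof -
        have "(\<Sum>t'\<in>T. row (Inr t) t' * y t') = (\<Sum>t'\<in>T. if t' = t then - y t' else 0)"
          by (intro sum.cong) (auto simp: row_def)
        then show ?thesis using that T by simp
      qed
      ultimately show ?thesis by simp
    qed
    define Y where "Y = (\<Sum>t\<in>T. y t)"
    have Ypos: "Y > 0" unfolding Y_def using ypos T by (intro sum_pos) auto
    define y' where "y' t = (if t \<in> T then y t / Y else 0)" for t
    have "y' \<in> mixed_strats T"
      unfolding mixed_strats_def y'_def using ypos Ypos
      by (auto simp: sum_divide_distrib[symmetric] Y_def less_imp_le)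
    moreover have "\<forall>s\<in>S. (\<Sum>t\<in>T. M s t * y' t) < 0"
    proof
      fix s assume s: "s \<in> S"
      have "(\<Sum>t\<in>T. M s t * y' t) = (\<Sum>t\<in>T. M s t * y t) / Y"
        unfolding y'_def by (simp add: sum_divide_distrib)
      moreover have "(\<Sum>t\<in>T. row (Inl s) t * y t) < 0" using y s unfolding I_def by auto
      then have "(\<Sum>t\<in>T. M s t * y t) < 0" by (simp add: row_def)
      ultimately show "(\<Sum>t\<in>T. M s t * y' t) < 0" using Ypos by (simp add: divide_neg_pos)
    qed
    ultimately show ?thesis by blast
  next
    fix x assume x: "\<forall>i\<in>I. 0 \<le> x i" "\<exists>i\<in>I. 0 < x i" "\<forall>t\<in>T. (\<Sum>i\<in>I. x i * row i t) = 0"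
    have key: "(\<Sum>s\<in>S. x (Inl s) * M s t) = x (Inr t)" if "t \<in> T" for t
    proof -
      have "(\<Sum>i\<in>I. x i * row i t) = (\<Sum>s\<in>S. x (Inl s) * M s t) - x (Inr t)"
        unfolding sumI using that T by (simp add: row_def if_distrib cong: if_cong)
      then show ?thesis using x(3) that by simp
    qed
    define X where "X = (\<Sum>s\<in>S. x (Inl s))"
    have Xnn: "X \<ge> 0" unfolding X_def using x(1) unfolding I_def by (auto intro!: sum_nonneg)
    have "X \<noteq> 0"
    proof
      assume "X = 0"
      have xS: "\<And>s. s \<in> S \<Longrightarrow> 0 \<le> x (Inl s)" using x(1) unfolding I_def by auto
      have "(\<Sum>s\<in>S. x (Inl s)) = 0 \<longleftrightarrow> (\<forall>s\<in>S. x (Inl s) = 0)"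
        by (rule sum_nonneg_eq_0_iff[OF S(1)]) (rule xS)
      then have z: "\<forall>s\<in>S. x (Inl s) = 0" using \<open>X = 0\<close> unfolding X_def by blast
      have "\<forall>t\<in>T. x (Inr t) = 0"
      proof
        fix t assume t: "t \<in> T"
        have "x (Inr t) = (\<Sum>s\<in>S. x (Inl s) * M s t)" using key[OF t] by simp
        also have "\<dots> = 0" using z by simp
        finally show "x (Inr t) = 0" .
      qed
      with z x(2) show False unfolding I_def by auto
    qed
    with Xnn have Xpos: "X > 0" by simp
    define x' where "x' s = (if s \<in> S then x (Inl s) / X else 0)" for s
    have "x' \<in> mixed_strats S"
      unfolding mixed_strats_def x'_def using x(1) Xpos
      by (auto simp: sum_divide_distrib[symmetric] X_def I_def)
    moreover have "\<forall>t\<in>T. 0 \<le> (\<Sum>s\<in>S. x' s * M s t)"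
    proof
      fix t assume t: "t \<in> T"
      have "(\<Sum>s\<in>S. x' s * M s t) = (\<Sum>s\<in>S. x (Inl s) * M s t) / X"
        unfolding x'_def by (simp add: sum_divide_distrib)
      then show "0 \<le> (\<Sum>s\<in>S. x' s * M s t)" using key[OF t] x(1) t Xpos unfolding I_def by simp
    qed
    ultimately show ?thesis by blast
  qed
qed

lemma bilin_rows: "bilin S T x M y = (\<Sum>s\<in>S. x s * (\<Sum>t\<in>T. M s t * y t))"
  unfolding bilin_def by (simp add: sum_distrib_left mult_ac)

lemma bilin_cols: "bilin S T x M y = (\<Sum>t\<in>T. y t * (\<Sum>s\<in>S. x s * M s t))"
  unfolding bilin_def by (subst sum.swap) (simp add: sum_distrib_left mult_ac)

lemma bilin_transpose: "bilin T S y (\<lambda>t s. M s t) x = bilin S T x M y"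
  unfolding bilin_def by (subst sum.swap) (simp add: mult_ac)

lemma ms_bound: "x \<in> mixed_strats S \<Longrightarrow> finite S \<Longrightarrow> s \<in> S \<Longrightarrow> 0 \<le> x s \<and> x s \<le> 1"
  unfolding mixed_strats_def using member_le_sum[of s S x] by auto

lemma bilin_bound:
  assumes "finite S" "finite T" "x \<in> mixed_strats S" "y \<in> mixed_strats T"
  shows "\<bar>bilin S T x M y\<bar> \<le> (\<Sum>s\<in>S. \<Sum>t\<in>T. \<bar>M s t\<bar>)"
proof -
  have "\<bar>bilin S T x M y\<bar> \<le> (\<Sum>s\<in>S. \<Sum>t\<in>T. \<bar>M s t * x s * y t\<bar>)"
    unfolding bilin_def by (rule order_trans[OF sum_abs]) (intro sum_mono sum_abs)
  also have "\<dots> \<le> (\<Sum>s\<in>S. \<Sum>t\<in>T. \<bar>M s t\<bar>)"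
  proof (intro sum_mono)
    fix s t assume st: "s \<in> S" "t \<in> T"
    have "x s * y t \<le> 1" "0 \<le> x s * y t"
      using ms_bound[OF assms(3,1) st(1)] ms_bound[OF assms(4,2) st(2)] by (auto intro: mult_le_one)
    then have "\<bar>M s t\<bar> * (x s * y t) \<le> \<bar>M s t\<bar>" by (intro mult_left_le) auto
    moreover have "\<bar>M s t * x s * y t\<bar> = \<bar>M s t\<bar> * (x s * y t)"
      using ms_bound[OF assms(3,1) st(1)] ms_bound[OF assms(4,2) st(2)] by (simp add: abs_mult)
    ultimately show "\<bar>M s t * x s * y t\<bar> \<le> \<bar>M s t\<bar>" by simp
  qed
  finally show ?thesis .
qed

lemma ms_ne: "finite S \<Longrightarrow> s0 \<in> S \<Longrightarrow> (\<lambda>s. if s = s0 then 1 else 0) \<in> mixed_strats S"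
  unfolding mixed_strats_def by auto

lemma minimax:
  fixes M :: "'s \<Rightarrow> 't \<Rightarrow> real"
  assumes S: "finite S" "S \<noteq> {}" and T: "finite T" "T \<noteq> {}"
  shows "\<exists>x\<in>mixed_strats S. \<forall>y\<in>mixed_strats T.
    (INF y\<in>mixed_strats T. SUP x\<in>mixed_strats S. bilin S T x M y) \<le> bilin S T x M y"
proof -
  define a where "a = (INF y\<in>mixed_strats T. SUP x\<in>mixed_strats S. bilin S T x M y)"
  define K where "K = (\<Sum>s\<in>S. \<Sum>t\<in>T. \<bar>M s t\<bar>)"
  obtain s0 where s0: "s0 \<in> S" using S by auto
  define x0 where "x0 = (\<lambda>s. if s = s0 then 1 else (0::real))"
  have x0: "x0 \<in> mixed_strats S" unfolding x0_def using ms_ne[OF S(1) s0] .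
  have bdd: "bdd_above ((\<lambda>x. bilin S T x M y) ` mixed_strats S)" if "y \<in> mixed_strats T" for y
  proof (rule bdd_aboveI[of _ K])
    fix v assume "v \<in> (\<lambda>x. bilin S T x M y) ` mixed_strats S"
    then obtain x where "x \<in> mixed_strats S" "v = bilin S T x M y" by auto
    then show "v \<le> K" using bilin_bound[OF S(1) T(1) _ that, of x M] unfolding K_def by linarith
  qed
  have bddb: "bdd_below ((\<lambda>y. SUP x\<in>mixed_strats S. bilin S T x M y) ` mixed_strats T)"
  proof (rule bdd_belowI[of _ "-K"])
    fix v assume "v \<in> (\<lambda>y. SUP x\<in>mixed_strats S. bilin S T x M y) ` mixed_strats T"
    then obtain y where y: "y \<in> mixed_strats T" "v = (SUP x\<in>mixed_strats S. bilin S T x M y)" by auto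
    have "-K \<le> bilin S T x0 M y" using bilin_bound[OF S(1) T(1) x0 y(1), of M] unfolding K_def by linarith
    also have "\<dots> \<le> v" using cSUP_upper[OF x0 bdd[OF y(1)]] y(2) by simp
    finally show "-K \<le> v" .
  qed
  have "\<exists>x\<in>mixed_strats S. \<forall>y\<in>mixed_strats T. a \<le> bilin S T x M y"
    using ville[OF S T, of "\<lambda>s t. M s t - a"]
  proof
    assume "\<exists>y\<in>mixed_strats T. \<forall>s\<in>S. (\<Sum>t\<in>T. (M s t - a) * y t) < 0"
    then obtain y where y: "y \<in> mixed_strats T" "\<forall>s\<in>S. (\<Sum>t\<in>T. (M s t - a) * y t) < 0" by blast
    have y1: "(\<Sum>t\<in>T. y t) = 1" using y(1) unfolding mixed_strats_def by auto
    have lt: "(\<Sum>t\<in>T. M s t * y t) < a" if "s \<in> S" for s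
    proof -
      have "(\<Sum>t\<in>T. (M s t - a) * y t) = (\<Sum>t\<in>T. M s t * y t) - a * (\<Sum>t\<in>T. y t)"
        by (simp add: left_diff_distrib sum_subtractf sum_distrib_left)
      moreover have "(\<Sum>t\<in>T. (M s t - a) * y t) < 0" using y(2) that by blast
      ultimately show ?thesis using y1 by simp
    qed
    define m where "m = Max ((\<lambda>s. \<Sum>t\<in>T. M s t * y t) ` S)"
    have "m \<in> (\<lambda>s. \<Sum>t\<in>T. M s t * y t) ` S" unfolding m_def using S by (intro Max_in) auto
    then have "m < a" using lt by auto
    have "(SUP x\<in>mixed_strats S. bilin S T x M y) \<le> m"
    proof (rule cSUP_least)
      show "mixed_strats S \<noteq> {}" using x0 by auto
    next
      fix x assume x: "x \<in> mixed_strats S"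
      have "bilin S T x M y = (\<Sum>s\<in>S. x s * (\<Sum>t\<in>T. M s t * y t))" by (rule bilin_rows)
      also have "\<dots> \<le> (\<Sum>s\<in>S. x s * m)"
      proof (intro sum_mono mult_left_mono)
        fix s assume "s \<in> S"
        then show "(\<Sum>t\<in>T. M s t * y t) \<le> m" "0 \<le> x s"
          unfolding m_def using S ms_bound[OF x S(1)] by auto
      qed
      also have "\<dots> = m" using x unfolding mixed_strats_def by (simp add: sum_distrib_right[symmetric])
      finally show "bilin S T x M y \<le> m" .
    qed
    moreover have "a \<le> (SUP x\<in>mixed_strats S. bilin S T x M y)" unfolding a_def by (rule cINF_lower[OF bddb y(1)])
    ultimately show ?thesis using \<open>m < a\<close> by linarith
  next
    assume "\<exists>x\<in>mixed_strats S. \<forall>t\<in>T. 0 \<le> (\<Sum>s\<in>S. x s * (M s t - a))"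
    then obtain x where x: "x \<in> mixed_strats S" "\<forall>t\<in>T. 0 \<le> (\<Sum>s\<in>S. x s * (M s t - a))" by blast
    have x1: "(\<Sum>s\<in>S. x s) = 1" using x(1) unfolding mixed_strats_def by auto
    have ge: "a \<le> (\<Sum>s\<in>S. x s * M s t)" if "t \<in> T" for t
    proof -
      have "(\<Sum>s\<in>S. x s * (M s t - a)) = (\<Sum>s\<in>S. x s * M s t) - a * (\<Sum>s\<in>S. x s)"
        by (simp add: right_diff_distrib sum_subtractf sum_distrib_left mult.commute)
      moreover have "0 \<le> (\<Sum>s\<in>S. x s * (M s t - a))" using x(2) that by blast
      ultimately show ?thesis using x1 by simp
    qed
    show ?thesis
    proof (intro bexI[OF _ x(1)] ballI)
      fix y assume y: "y \<in> mixed_strats T"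
      have y1: "(\<Sum>t\<in>T. y t) = 1" using y unfolding mixed_strats_def by auto
      have "a = (\<Sum>t\<in>T. y t * a)" using y1 by (simp add: sum_distrib_right[symmetric])
      also have "\<dots> \<le> (\<Sum>t\<in>T. y t * (\<Sum>s\<in>S. x s * M s t))"
        using ge ms_bound[OF y T(1)] by (intro sum_mono mult_left_mono) auto
      also have "\<dots> = bilin S T x M y" by (rule bilin_cols[symmetric])
      finally show "a \<le> bilin S T x M y" .
    qed
  qed
  then show ?thesis by (simp add: a_def)
qed

lemma minimax2:
  fixes M :: "'s \<Rightarrow> 't \<Rightarrow> real"
  assumes S: "finite S" "S \<noteq> {}" and T: "finite T" "T \<noteq> {}"
  shows "\<exists>y\<in>mixed_strats T. \<forall>x\<in>mixed_strats S.
    (INF x\<in>mixed_strats S. SUP y\<in>mixed_strats T. bilin S T x M y) \<le> bilin S T x M y"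
proof -
  have bt: "bilin T S y (\<lambda>t s. M s t) x = bilin S T x M y" for x y
    by (rule bilin_transpose)
  show ?thesis using minimax[OF T S, of "\<lambda>t s. M s t"] by (simp only: bt)
qed

lemma co_mem:
  assumes "finite S" "finite T" "x \<in> mixed_strats S" "y \<in> mixed_strats T"
  shows "(bilin S T x A y, bilin S T x B y) \<in> coAB S T A B"
proof -
  let ?P = "{(A s t, B s t) | s t. s \<in> S \<and> t \<in> T}"
  have x1: "(\<Sum>s\<in>S. x s) = 1" using assms(3) unfolding mixed_strats_def by auto
  have y1: "(\<Sum>t\<in>T. y t) = 1" using assms(4) unfolding mixed_strats_def by auto
  have cs: "(\<Sum>j\<in>S \<times> T. (x (fst j) * y (snd j)) *\<^sub>R (A (fst j) (snd j), B (fst j) (snd j))) \<in> convex hull ?P"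
  proof (rule convex_sum)
    show "finite (S \<times> T)" using assms by simp
    show "convex (convex hull ?P)" by simp
    have "(\<Sum>j\<in>S \<times> T. x (fst j) * y (snd j)) = (\<Sum>s\<in>S. \<Sum>t\<in>T. x s * y t)"
      by (simp add: sum.cartesian_product')
    also have "\<dots> = 1" using x1 y1 by (simp add: sum_product[symmetric])
    finally show "(\<Sum>j\<in>S \<times> T. x (fst j) * y (snd j)) = 1" .
    fix j assume "j \<in> S \<times> T"
    then show "0 \<le> x (fst j) * y (snd j)"
      using ms_bound[OF assms(3,1)] ms_bound[OF assms(4,2)] by auto
    show "(A (fst j) (snd j), B (fst j) (snd j)) \<in> convex hull ?P"
    proof (intro hull_inc)
      obtain s t where "j = (s, t)" "s \<in> S" "t \<in> T" using \<open>j \<in> S \<times> T\<close> by auto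
      then show "(A (fst j) (snd j), B (fst j) (snd j)) \<in> ?P" by auto
    qed
  qed
  have eq: "(\<Sum>j\<in>S \<times> T. (x (fst j) * y (snd j)) *\<^sub>R (A (fst j) (snd j), B (fst j) (snd j)))
     = (bilin S T x A y, bilin S T x B y)"
  proof (rule prod_eqI)
    show "fst (\<Sum>j\<in>S \<times> T. (x (fst j) * y (snd j)) *\<^sub>R (A (fst j) (snd j), B (fst j) (snd j))) = fst (bilin S T x A y, bilin S T x B y)"
      unfolding fst_sum bilin_def by (simp add: sum.cartesian_product' mult_ac)
    show "snd (\<Sum>j\<in>S \<times> T. (x (fst j) * y (snd j)) *\<^sub>R (A (fst j) (snd j), B (fst j) (snd j))) = snd (bilin S T x A y, bilin S T x B y)"
      unfolding snd_sum bilin_def by (simp add: sum.cartesian_product' mult_ac)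
  qed
  show ?thesis using cs unfolding eq coAB_def .
qed

theorem mainTheorem8:
  fixes S :: "'s set" and T :: "'t set"
    and A B :: "'s \<Rightarrow> 't \<Rightarrow> real" and \<epsilon> f g :: real
  assumes "finite S" "S \<noteq> {}" "finite T" "T \<noteq> {}"
    and "\<epsilon> > 0"
    and "Eacc S T A B \<epsilon> f g \<noteq> {}"
    and "(f - \<epsilon> \<ge> alpha S T A \<and> g - \<epsilon> \<ge> beta S T B)
         \<or> (f - \<epsilon> < alpha S T A \<and> g - \<epsilon> < beta S T B)"
  shows "Eq_payoffs S T A B \<inter> Eacc S T A B \<epsilon> f g \<noteq> {}"
  using assms(7)
proof
  assume c1: "f - \<epsilon> \<ge> alpha S T A \<and> g - \<epsilon> \<ge> beta S T B"
  obtain p where p: "p \<in> Eacc S T A B \<epsilon> f g" using assms(6) by auto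
  then have "p \<in> Eq_payoffs S T A B" using c1 unfolding Eacc_def Eq_payoffs_def by auto
  then show ?thesis using p by auto
next
  assume c2: "f - \<epsilon> < alpha S T A \<and> g - \<epsilon> < beta S T B"
  have mA: "\<exists>x\<in>mixed_strats S. \<forall>y\<in>mixed_strats T. alpha S T A \<le> bilin S T x A y"
    unfolding alpha_def by (fact minimax[OF assms(1-4), of A])
  have mB: "\<exists>y\<in>mixed_strats T. \<forall>x\<in>mixed_strats S. beta S T B \<le> bilin S T x B y"
    unfolding beta_def by (rule minimax2[OF assms(1-4)])
  obtain x where x: "x \<in> mixed_strats S" "\<forall>y\<in>mixed_strats T. alpha S T A \<le> bilin S T x A y"
    using mA by (elim bexE) blast
  obtain y where y: "y \<in> mixed_strats T" "\<forall>x\<in>mixed_strats S. beta S T B \<le> bilin S T x B y"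
    using mB by (elim bexE) blast
  have co: "(bilin S T x A y, bilin S T x B y) \<in> coAB S T A B"
    using co_mem[OF assms(1,3) x(1) y(1)] .
  have "(bilin S T x A y, bilin S T x B y) \<in> Eq_payoffs S T A B"
    using co x y unfolding Eq_payoffs_def by auto
  moreover have "(bilin S T x A y, bilin S T x B y) \<in> Eacc S T A B \<epsilon> f g"
  proof -
    have "alpha S T A \<le> bilin S T x A y" "beta S T B \<le> bilin S T x B y" using x y by auto
    then show ?thesis using co c2 unfolding Eacc_def by simp
  qed
  ultimately show ?thesis by blast
qed

end
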